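(* Let $n\ge 2$ and $q\ge 2$ be integers and put $S_1=\sqrt{q^2+4(q-1)(n-2)}$. Let $d$ be an integer and define $j$ by $d=n-1-\frac{n-2+j}{q}$ (so $j=q(n-1-d)-n+2$), and assume $j\in\left[0,\frac{S_1-q}{2}\right)$. Put $s=1-\frac{2d}{n}$, $d_0=n-\frac{j(n-1)}{q(j+q-1)}$, and let $e$ be the unique rational number in $(0,1]$ such that $d_0+e$ is an integer. Define $$f(t)=\Big(t+1+\tfrac{2e}{n}-\tfrac{2j(n-1)}{nq(j+q-1)}\Big)\Big(t+1+\tfrac{2(e-1)}{n}-\tfrac{2j(n-1)}{nq(j+q-1)}\Big)(t-s),$$ and write its Krawtchouk expansion as $f(t)=f_0+f_1Q_1^{(n,q)}(t)+f_2Q_2^{(n,q)}(t)+f_3Q_3^{(n,q)}(t)$. Then $f_2>0$.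
   Context: For integers $n,q$ and $0\le i\le n$, the Krawtchouk polynomial is $K_i^{(n,q)}(z)=\sum_{l=0}^{i}(-1)^l(q-1)^{i-l}\binom{z}{l}\binom{n-z}{i-l}$ (a polynomial in $z$ of degree $i$), and the normalized Krawtchouk polynomial is $Q_i^{(n,q)}(t)=\frac{1}{r_i}K_i^{(n,q)}\!\big(\tfrac{n(1-t)}{2}\big)$ with $r_i=(q-1)^i\binom{n}{i}$; every real polynomial of degree $m\le n$ in $t$ has a unique expansion $\sum_{i=0}^m f_iQ_i^{(n,q)}(t)$. *)

theory Defs
  imports Complex_Main
begin

definition kraw :: "nat \<Rightarrow> nat \<Rightarrow> nat \<Rightarrow> real \<Rightarrow> real" where
  "kraw n q i z = (\<Sum>l=0..i. (-1)^l * (real q - 1)^(i-l) * (z gchoose l) * ((real n - z) gchoose (i-l)))"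

definition normkraw :: "nat \<Rightarrow> nat \<Rightarrow> nat \<Rightarrow> real \<Rightarrow> real" where
  "normkraw n q i t = kraw n q i (real n * (1 - t) / 2) / ((real q - 1)^i * real (n choose i))"

end

theory Submission
  imports Defs
begin

lemma gch1: "(z::real) gchoose 1 = z" by (simp add: gbinomial_prod_rev)
lemma gch2: "(z::real) gchoose 2 = z*(z-1)/2" by (simp add: gbinomial_prod_rev numeral_eq_Suc)
lemma gch3: "(z::real) gchoose 3 = z*(z-1)*(z-2)/6" by (simp add: gbinomial_prod_rev numeral_eq_Suc field_simps)

lemma kraw1: "kraw n q 1 z = (real q - 1) * real n + (- real q) * z"
  unfolding kraw_def by (simp add: gch1 algebra_simps)

lemma kraw2: "kraw n q 2 z = (real q - 1)^2 * real n * (real n - 1)/2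
   + ((real q - 1)^2 * (1 - 2 * real n)/2 - (real q - 1) * real n - 1/2) * z + (real q)^2/2 * z^2"
proof -
  have e: "{0..2::nat} = {0,1,2}" by auto
  show ?thesis unfolding kraw_def e by (simp add: gch1 gch2 field_simps power2_eq_square)
qed

lemma kraw3: "kraw n q 3 z = (real q - 1)^3 * (real n^3 - 3*real n^2 + 2*real n)/6
   + ((real q - 1)^3 * (-3*real n^2 + 6*real n - 2)/6 - (real q - 1)^2 * (real n^2 - real n)/2 - (real q - 1)*real n/2 - 1/3) * z
   + (real q)^2 * (real n * (real q - 1) - real q + 2)/2 * z^2 + (-((real q)^3/6)) * z^3"
proof -
  have e: "{0..3::nat} = {0,1,2,3}" by auto
  show ?thesis unfolding kraw_def e by (simp add: gch1 gch2 gch3 field_simps power2_eq_square power3_eq_cube)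
qed



lemma cubic_coeffs:
  fixes a0 a1 a2 a3 :: real
  assumes "\<forall>z. a0 + a1*z + a2*z^2 + a3*z^3 = 0"
  shows "a3 = 0" "a2 = 0"
proof -
  have h0: "a0 = 0" using spec[OF assms, of 0] by simp
  have h1: "a0 + a1 + a2 + a3 = 0" using spec[OF assms, of 1] by simp
  have h2: "a0 + 2*a1 + 4*a2 + 8*a3 = 0" using spec[OF assms, of 2] by simp
  have h3: "a0 + 3*a1 + 9*a2 + 27*a3 = 0" using spec[OF assms, of 3] by simp
  show "a3 = 0" using h0 h1 h2 h3 by linarith
  show "a2 = 0" using h0 h1 h2 h3 by linarith
qed

lemma tri:
  fixes c0 c1 c2 c3 g0 g1 g2 g3 k10 k11 k20 k21 k22 k30 k31 k32 k33 z :: real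
  assumes "k11 \<noteq> 0" "k22 \<noteq> 0" "k33 \<noteq> 0"
    "g3 = c3/k33" "g2 = (c2 - g3*k32)/k22" "g1 = (c1 - g3*k31 - g2*k21)/k11"
    "g0 = c0 - g3*k30 - g2*k20 - g1*k10"
  shows "c0 + c1*z + c2*z^2 + c3*z^3 = g0 + g1*(k10 + k11*z) + g2*(k20+k21*z+k22*z^2) + g3*(k30+k31*z+k32*z^2+k33*z^3)"
proof -
  have "c3 = g3*k33" using assms by simp
  moreover have "c2 = g2*k22 + g3*k32" using assms by simp
  moreover have "c1 = g1*k11 + g2*k21 + g3*k31" using assms by simp
  moreover have "c0 = g0 + g1*k10 + g2*k20 + g3*k30" using assms by simp
  ultimately show ?thesis by (simp add: algebra_simps)
qed

lemma uniq:
  fixes c0 c1 c2 c3 g0 g1 g2 g3 k10 k11 k20 k21 k22 k30 k31 k32 k33 :: real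
  assumes "\<forall>z. c0 + c1*z + c2*z^2 + c3*z^3 = g0 + g1*(k10 + k11*z) + g2*(k20+k21*z+k22*z^2) + g3*(k30+k31*z+k32*z^2+k33*z^3)"
  shows "c3 = g3*k33" "c2 = g2*k22 + g3*k32"
proof -
  have "\<forall>z. (c0 - g0 - g1*k10 - g2*k20 - g3*k30) + (c1 - g1*k11 - g2*k21 - g3*k31)*z
     + (c2 - g2*k22 - g3*k32)*z^2 + (c3 - g3*k33)*z^3 = 0"
  proof
    fix z :: real
    have "c0 + c1*z + c2*z^2 + c3*z^3 = g0 + g1*(k10 + k11*z) + g2*(k20+k21*z+k22*z^2) + g3*(k30+k31*z+k32*z^2+k33*z^3)"
      using assms by blast
    then show "(c0 - g0 - g1*k10 - g2*k20 - g3*k30) + (c1 - g1*k11 - g2*k21 - g3*k31)*z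
     + (c2 - g2*k22 - g3*k32)*z^2 + (c3 - g3*k33)*z^3 = 0"
      by (simp add: algebra_simps)
  qed
  from cubic_coeffs[OF this] show "c3 = g3*k33" "c2 = g2*k22 + g3*k32" by simp_all
qed

lemma key:
  fixes N Q J D e d0 :: real
  assumes "N \<ge> 2" "Q \<ge> 2" "J \<ge> 0" "J^2 + J*Q < (Q-1)*(N-2)"
    "D = N - 1 - (J+N-2)/Q" "d0 = N - J*(N-1)/(Q*(J+Q-1))" "e > 0"
  shows "(2*(d0+e) - 1 + D)*Q > 3*(N*(Q-1) - Q + 2)"
proof -
  have pos: "J+Q-1 > 0" using assms by simp
  have poly: "2*(J*(N-1)) \<le> (2*N+Q-4-J)*(J+Q-1)"
  proof -
    have "J \<le> J*Q" using assms by (simp add: mult_le_cancel_left1)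
    moreover have "(2*N+Q-4-J)*(J+Q-1) - 2*(J*(N-1)) = 2*((Q-1)*(N-2)) + Q*(Q-1) - J^2 - J"
      by (simp add: algebra_simps power2_eq_square)
    moreover have "(Q-1)*(N-2) \<ge> 0" "Q*(Q-1) \<ge> 0" using assms by simp_all
    ultimately show ?thesis using assms(4) by linarith
  qed
  have W: "J*(N-1)/(J+Q-1) \<le> (2*N+Q-4-J)/2"
  proof -
    have "J*(N-1) \<le> ((2*N+Q-4-J)/2)*(J+Q-1)" using poly by (simp add: algebra_simps)
    then show ?thesis using pos by (simp add: pos_divide_le_eq)
  qed
  have Qd0: "Q*d0 = Q*N - J*(N-1)/(J+Q-1)"
  proof -
    have "Q \<noteq> 0" "J+Q-1 \<noteq> 0" using assms pos by auto
    then have "Q*(J*(N-1)/(Q*(J+Q-1))) = J*(N-1)/(J+Q-1)" by simp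
    then show ?thesis unfolding assms(6) by (simp add: right_diff_distrib)
  qed
  have QD: "Q*D = Q*(N-1) - J - N + 2" using assms by (simp add: field_simps)
  have "(2*(d0+e) - 1 + D)*Q = 2*(Q*d0) + 2*Q*e - Q + Q*D" by (simp add: algebra_simps)
  also have "\<dots> = 2*(Q*N - J*(N-1)/(J+Q-1)) + 2*Q*e - Q + (Q*(N-1) - J - N + 2)" using Qd0 QD by simp
  finally have eq: "(2*(d0+e) - 1 + D)*Q = 2*(Q*N - J*(N-1)/(J+Q-1)) + 2*Q*e - Q + (Q*(N-1) - J - N + 2)" .
  have "Q*e > 0" using assms by simp
  then show ?thesis using eq W by (simp add: algebra_simps)
qed

theorem lemma1:
  fixes n q :: nat and d j :: int and S1 s d0 e :: real and f :: "real \<Rightarrow> real"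
  assumes "n \<ge> 2" and "q \<ge> 2"
    and "S1 = sqrt (real q ^ 2 + 4 * (real q - 1) * (real n - 2))"
    and "j = int q * (int n - 1 - d) - int n + 2"
    and "0 \<le> j" and "real_of_int j < (S1 - real q) / 2"
    and "s = 1 - 2 * real_of_int d / real n"
    and "d0 = real n - real_of_int j * (real n - 1) / (real q * (real_of_int j + real q - 1))"
    and "e = (THE e. e \<in> \<rat> \<and> 0 < e \<and> e \<le> 1 \<and> d0 + e \<in> \<int>)"
    and "\<And>t. f t = (t + 1 + 2 * e / real n - 2 * real_of_int j * (real n - 1) / (real n * real q * (real_of_int j + real q - 1)))
                 * (t + 1 + 2 * (e - 1) / real n - 2 * real_of_int j * (real n - 1) / (real n * real q * (real_of_int j + real q - 1)))
                 * (t - s)"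
  shows "(\<exists>f0 f1 f2 f3. \<forall>t. f t = f0 + f1 * normkraw n q 1 t + f2 * normkraw n q 2 t + f3 * normkraw n q 3 t)
       \<and> (\<forall>f0 f1 f2 f3. (\<forall>t. f t = f0 + f1 * normkraw n q 1 t + f2 * normkraw n q 2 t + f3 * normkraw n q 3 t) \<longrightarrow> f2 > 0)"
proof -
  define N Q J D where "N = real n" and "Q = real q" and "J = real_of_int j" and "D = real_of_int d"
  have N2: "N \<ge> 2" using assms(1) by (simp add: N_def)
  have Q2: "Q \<ge> 2" using assms(2) by (simp add: Q_def)
  have J0: "J \<ge> 0" using assms(5) by (simp add: J_def)
  have rad: "0 \<le> Q^2 + 4*(Q-1)*(N-2)" using N2 Q2 by simp
  have S1sq: "S1^2 = Q^2 + 4*(Q-1)*(N-2)" using assms(3) rad by (simp add: N_def Q_def)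
  have lt: "2*J + Q < S1" using assms(6) by (simp add: J_def Q_def)
  have "(2*J+Q)^2 < S1^2" by (rule power_strict_mono) (use lt J0 Q2 in auto)
  hence Jineq: "J^2 + J*Q < (Q-1)*(N-2)" using S1sq by (simp add: power2_eq_square algebra_simps)
  have N3: "N \<ge> 3"
  proof (rule ccontr)
    assume "\<not> N \<ge> 3"
    then have "n = 2" using assms(1) by (simp add: N_def)
    then have "N = 2" by (simp add: N_def)
    moreover have "J^2 + J*Q \<ge> 0" using J0 Q2 by simp
    ultimately show False using Jineq by simp
  qed
  have n3: "n \<ge> 3" using N3 by (simp add: N_def)
  have Qpos: "Q > 0" and Npos: "N > 0" and JQpos: "J+Q-1 > 0" using N2 Q2 J0 by auto
  have DJ: "D = N - 1 - (J+N-2)/Q"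
  proof -
    have "J = Q*(N-1-D) - N + 2" using assms(4) by (simp add: J_def Q_def N_def D_def)
    then have "J + N - 2 = Q*(N-1-D)" by simp
    then have "(J+N-2)/Q = N-1-D" using Qpos by simp
    then show ?thesis by simp
  qed
  define Y where "Y = J*(N-1)/(Q*(J+Q-1))"
  have d0: "d0 = N - Y" using assms(8) by (simp add: Y_def N_def J_def Q_def)
  define P where "P = (\<lambda>x::real. x \<in> \<rat> \<and> 0 < x \<and> x \<le> 1 \<and> d0 + x \<in> \<int>)"
  define e0 where "e0 = of_int (floor d0) + 1 - d0"
  have d0Q: "d0 \<in> \<rat>" unfolding assms(8) by (auto intro!: Rats_diff Rats_divide Rats_mult Rats_add)
  have Pe0: "P e0"
  proof -
    have "e0 \<in> \<rat>" unfolding e0_def using d0Q by (auto intro!: Rats_diff Rats_add)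
    moreover have "0 < e0" "e0 \<le> 1" unfolding e0_def using floor_correct[of d0] by linarith+
    moreover have "d0 + e0 \<in> \<int>" unfolding e0_def by simp
    ultimately show ?thesis unfolding P_def by blast
  qed
  have uP: "x = e0" if "P x" for x
  proof -
    from that have "d0 + x \<in> \<int>" "0 < x" "x \<le> 1" unfolding P_def by auto
    then obtain k where k: "d0 + x = of_int k" by (auto elim: Ints_cases)
    have "floor d0 = k - 1" by (rule floor_unique) (use k \<open>0 < x\<close> \<open>x \<le> 1\<close> in auto)
    then show ?thesis unfolding e0_def using k by simp
  qed
  have "e = e0" unfolding assms(9) using the_equality[of P e0, OF Pe0 uP] unfolding P_def by simp
  then have epos: "e > 0" using Pe0 unfolding P_def by simp
  define m where "m = d0 + e"
  define a where "a = 8 / N^3"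
  have apos: "a > 0" unfolding a_def using Npos by simp
  have fdef: "f t = (t + 1 + 2*e/N - 2*Y/N) * (t + 1 + 2*(e-1)/N - 2*Y/N) * (t - s)" for t
  proof -
    have "2 * real_of_int j * (real n - 1) / (real n * real q * (real_of_int j + real q - 1)) = 2*Y/N"
      unfolding Y_def N_def Q_def J_def using Npos by (simp add: N_def field_simps)
    then show ?thesis using assms(10)[of t] by (simp add: N_def)
  qed
  have fz: "f (1 - 2*z/N) = -a * ((z-m)*(z-m+1)*(z-D))" for z
  proof -
    have f1: "1 - 2*z/N + 1 + 2*e/N - 2*Y/N = -(2/N)*(z-m)"
      unfolding m_def d0 using Npos by (simp add: field_simps)
    have f2: "1 - 2*z/N + 1 + 2*(e-1)/N - 2*Y/N = -(2/N)*(z-m+1)"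
      unfolding m_def d0 using Npos by (simp add: field_simps)
    have f3: "1 - 2*z/N - s = -(2/N)*(z-D)"
      unfolding assms(7) D_def[symmetric] N_def[symmetric] using Npos by (simp add: field_simps)
    have "f (1 - 2*z/N) = (-(2/N)*(z-m)) * (-(2/N)*(z-m+1)) * (-(2/N)*(z-D))"
      unfolding fdef f1 f2 f3 by simp
    also have "\<dots> = -a * ((z-m)*(z-m+1)*(z-D))" unfolding a_def by (simp add: field_simps power3_eq_cube)
    finally show ?thesis .
  qed
  define c0 c1 c2 c3 where "c0 = a*(D*m*(m-1))" and "c1 = -a*(m*(m-1)+D*(2*m-1))"
    and "c2 = a*(2*m-1+D)" and "c3 = -a"
  have Fc: "f (1 - 2*z/N) = c0 + c1*z + c2*z^2 + c3*z^3" for z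
    unfolding fz c0_def c1_def c2_def c3_def by (simp add: algebra_simps power2_eq_square power3_eq_cube)
  define k10 k11 where "k10 = (Q-1)*N" and "k11 = -Q"
  define k20 k21 k22 where "k20 = (Q-1)^2*N*(N-1)/2" and "k21 = (Q-1)^2*(1-2*N)/2 - (Q-1)*N - 1/2"
    and "k22 = Q^2/2"
  define k30 k31 k32 k33 where "k30 = (Q-1)^3*(N^3 - 3*N^2 + 2*N)/6"
    and "k31 = (Q-1)^3*(-3*N^2 + 6*N - 2)/6 - (Q-1)^2*(N^2 - N)/2 - (Q-1)*N/2 - 1/3"
    and "k32 = Q^2*(N*(Q-1) - Q + 2)/2" and "k33 = -(Q^3/6)"
  have K1: "kraw n q 1 z = k10 + k11*z" for z
    using kraw1[of n q z] unfolding k10_def k11_def N_def Q_def .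
  have K2: "kraw n q 2 z = k20 + k21*z + k22*z^2" for z
    using kraw2[of n q z] unfolding k20_def k21_def k22_def N_def Q_def .
  have K3: "kraw n q 3 z = k30 + k31*z + k32*z^2 + k33*z^3" for z
    using kraw3[of n q z] unfolding k30_def k31_def k32_def k33_def N_def Q_def .
  define r1 r2 r3 where "r1 = (real q - 1)^1 * real (n choose 1)" and "r2 = (real q - 1)^2 * real (n choose 2)"
    and "r3 = (real q - 1)^3 * real (n choose 3)"
  have rpos: "r1 > 0" "r2 > 0" "r3 > 0" unfolding r1_def r2_def r3_def using assms(2) n3 by auto
  have NK: "normkraw n q i (1 - 2*z/N) = kraw n q i z / ((real q - 1)^i * real (n choose i))" for i z
  proof -
    have "real n * (1 - (1 - 2*z/N)) / 2 = z" using Npos by (simp add: N_def)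
    then show ?thesis unfolding normkraw_def by simp
  qed
  have tz: "t = 1 - 2*(N*(1-t)/2)/N" for t using Npos by simp
  have k11nz: "k11 \<noteq> 0" and k22nz: "k22 \<noteq> 0" and k33nz: "k33 \<noteq> 0"
    unfolding k11_def k22_def k33_def using Qpos by auto
  show ?thesis
  proof
    define g3 where "g3 = c3/k33"
    define g2 where "g2 = (c2 - g3*k32)/k22"
    define g1 where "g1 = (c1 - g3*k31 - g2*k21)/k11"
    define g0 where "g0 = c0 - g3*k30 - g2*k20 - g1*k10"
    have "\<forall>t. f t = g0 + (g1*r1) * normkraw n q 1 t + (g2*r2) * normkraw n q 2 t + (g3*r3) * normkraw n q 3 t"
    proof
      fix t
      define z where "z = N*(1-t)/2"
      have tt: "t = 1 - 2*z/N" unfolding z_def using tz .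
      have "f t = c0 + c1*z + c2*z^2 + c3*z^3" unfolding tt by (rule Fc)
      also have "\<dots> = g0 + g1*(k10 + k11*z) + g2*(k20+k21*z+k22*z^2) + g3*(k30+k31*z+k32*z^2+k33*z^3)"
        by (rule tri[OF k11nz k22nz k33nz g3_def g2_def g1_def g0_def])
      also have "\<dots> = g0 + (g1*r1) * normkraw n q 1 t + (g2*r2) * normkraw n q 2 t + (g3*r3) * normkraw n q 3 t"
        unfolding tt NK K1[symmetric] K2[symmetric] K3[symmetric] r1_def[symmetric] r2_def[symmetric] r3_def[symmetric]
        using rpos by simp
      finally show "f t = g0 + (g1*r1) * normkraw n q 1 t + (g2*r2) * normkraw n q 2 t + (g3*r3) * normkraw n q 3 t" .
    qed
    then show "\<exists>f0 f1 f2 f3. \<forall>t. f t = f0 + f1 * normkraw n q 1 t + f2 * normkraw n q 2 t + f3 * normkraw n q 3 t"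
      by blast
  next
    show "\<forall>f0 f1 f2 f3. (\<forall>t. f t = f0 + f1 * normkraw n q 1 t + f2 * normkraw n q 2 t + f3 * normkraw n q 3 t) \<longrightarrow> f2 > 0"
    proof (intro allI impI)
      fix f0 f1 f2 f3
      assume rep: "\<forall>t. f t = f0 + f1 * normkraw n q 1 t + f2 * normkraw n q 2 t + f3 * normkraw n q 3 t"
      have "\<forall>z. c0 + c1*z + c2*z^2 + c3*z^3 = f0 + (f1/r1)*(k10 + k11*z) + (f2/r2)*(k20+k21*z+k22*z^2) + (f3/r3)*(k30+k31*z+k32*z^2+k33*z^3)"
      proof
        fix z
        have "c0 + c1*z + c2*z^2 + c3*z^3 = f (1 - 2*z/N)" using Fc by simp
        also have "\<dots> = f0 + f1 * normkraw n q 1 (1 - 2*z/N) + f2 * normkraw n q 2 (1 - 2*z/N) + f3 * normkraw n q 3 (1 - 2*z/N)"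
          using rep by blast
        also have "\<dots> = f0 + (f1/r1)*(k10 + k11*z) + (f2/r2)*(k20+k21*z+k22*z^2) + (f3/r3)*(k30+k31*z+k32*z^2+k33*z^3)"
          unfolding NK K1[symmetric] K2[symmetric] K3[symmetric] r1_def[symmetric] r2_def[symmetric] r3_def[symmetric]
          by simp
        finally show "c0 + c1*z + c2*z^2 + c3*z^3 = f0 + (f1/r1)*(k10 + k11*z) + (f2/r2)*(k20+k21*z+k22*z^2) + (f3/r3)*(k30+k31*z+k32*z^2+k33*z^3)" .
      qed
      from uniq[OF this] have u3: "c3 = (f3/r3)*k33" and u2: "c2 = (f2/r2)*k22 + (f3/r3)*k32" by auto
      have g3: "f3/r3 = c3/k33" using u3 k33nz by simp
      have "(2*(d0+e) - 1 + D)*Q > 3*(N*(Q-1) - Q + 2)"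
        by (rule key[OF N2 Q2 J0 Jineq DJ]) (use assms(8) epos in \<open>simp_all add: N_def Q_def J_def\<close>)
      then have kpos: "(2*m - 1 + D)*Q - 3*(N*(Q-1) - Q + 2) > 0" unfolding m_def by simp
      have "c2 - (c3/k33)*k32 = (a/Q)*((2*m - 1 + D)*Q - 3*(N*(Q-1) - Q + 2))"
        unfolding c2_def c3_def k33_def k32_def using Qpos by (simp add: field_simps power2_eq_square power3_eq_cube)
      also have "\<dots> > 0" using apos Qpos kpos by simp
      finally have "(f2/r2)*k22 > 0" using u2 g3 by simp
      moreover have "k22 > 0" unfolding k22_def using Qpos by simp
      ultimately have "f2/r2 > 0" by (rule zero_less_mult_pos2)
      then show "f2 > 0" using rpos by (simp add: zero_less_divide_iff)
    qed
  qed
qed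

end
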